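(* Let $(\rho_n)$, $(\tau_n)$ be sequences of positive functions on $\mathbb{R}^2$ with $\int_{\mathbb{R}^2}\rho_n dx=a>0$ and $\int_{\mathbb{R}^2}\tau_n dx=b>0$ for all $n$. Suppose $(B_1(\rho_n,\tau_n))$ is bounded. Then for every $\varepsilon>0$ there exists $\xi(\varepsilon)>0$ such that for all $r>\xi$ and all $n\in\mathbb{N}$, $$\sup_{x\in\mathbb{R}^2}\int_{B_r(x)}\rho_n(y)dy\ge a-\varepsilon\quad\text{and}\quad \sup_{x\in\mathbb{R}^2}\int_{B_r(x)}\tau_n(y)dy\ge b-\varepsilon.$$
   Context: $B_1(f,g):=\iint_{\mathbb{R}^2\times\mathbb{R}^2}\log(1+|x-y|)f(x)g(y)\,dx\,dy$ for nonnegative measurable $f,g$; $B_r(x)$ is the ball of radius $r$ centered at $x$. *)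

theory Defs
  imports "HOL-Analysis.Analysis"
begin

definition B1 :: "(real^2 \<Rightarrow> real) \<Rightarrow> (real^2 \<Rightarrow> real) \<Rightarrow> ennreal" where
  "B1 f g = (\<integral>\<^sup>+ x. (\<integral>\<^sup>+ y. ennreal (ln (1 + dist x y) * f x * g y) \<partial>lebesgue) \<partial>lebesgue)"

end

theory Submission imports Defs begin
lemma sf_leb: "sigma_finite_measure (lebesgue :: ('a::euclidean_space) measure)"
proof
  show "\<exists>A::'a set set. countable A \<and> A \<subseteq> sets lebesgue \<and> \<Union>A = space lebesgue \<and> (\<forall>a\<in>A. emeasure lebesgue a \<noteq> \<infinity>)"
    by (intro exI[of _ "range (\<lambda>n::nat. box (- real n *\<^sub>R One) (real n *\<^sub>R One))"])
       (auto simp: emeasure_lborel_box_eq UN_box_eq_UNIV)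
qed

lemma fst_leb: "fst \<in> measurable (lebesgue \<Otimes>\<^sub>M lebesgue) (borel :: ('a::euclidean_space) measure)"
  by (rule measurable_compose[OF measurable_fst measurable_completion[OF measurable_ident_sets[OF sets_lborel]]])
lemma snd_leb: "snd \<in> measurable (lebesgue \<Otimes>\<^sub>M lebesgue) (borel :: ('a::euclidean_space) measure)"
  by (rule measurable_compose[OF measurable_snd measurable_completion[OF measurable_ident_sets[OF sets_lborel]]])

lemma dist_leb: "(\<lambda>p. dist (fst p) (snd p)) \<in> borel_measurable (lebesgue \<Otimes>\<^sub>M (lebesgue :: ('a::euclidean_space) measure))"
  using fst_leb snd_leb by measurable

lemma h_meas:
  fixes f g :: "real^2 \<Rightarrow> real"
  assumes "f \<in> borel_measurable lebesgue" "g \<in> borel_measurable lebesgue"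
  shows "(\<lambda>p. ennreal (ln (1 + dist (fst p) (snd p)) * f (fst p) * g (snd p))) \<in> borel_measurable (lebesgue \<Otimes>\<^sub>M lebesgue)"
proof -
  have "(\<lambda>p. f (fst p)) \<in> borel_measurable (lebesgue \<Otimes>\<^sub>M lebesgue)"
    by (rule measurable_compose[OF measurable_fst assms(1)])
  moreover have "(\<lambda>p. g (snd p)) \<in> borel_measurable (lebesgue \<Otimes>\<^sub>M lebesgue)"
    by (rule measurable_compose[OF measurable_snd assms(2)])
  ultimately show ?thesis using dist_leb by measurable
qed

lemma B1_sym:
  fixes f g :: "real^2 \<Rightarrow> real"
  assumes "f \<in> borel_measurable lebesgue" "g \<in> borel_measurable lebesgue"
  shows "B1 f g = B1 g f"
proof -
  interpret P: pair_sigma_finite lebesgue lebesgue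
    by (simp add: pair_sigma_finite_def sf_leb)
  have "B1 f g = (\<integral>\<^sup>+ x. \<integral>\<^sup>+ y. (\<lambda>p. ennreal (ln (1 + dist (fst p) (snd p)) * f (fst p) * g (snd p))) (x, y) \<partial>lebesgue \<partial>lebesgue)"
    unfolding B1_def by simp
  also have "\<dots> = (\<integral>\<^sup>+ y. \<integral>\<^sup>+ x. (\<lambda>p. ennreal (ln (1 + dist (fst p) (snd p)) * f (fst p) * g (snd p))) (x, y) \<partial>lebesgue \<partial>lebesgue)"
    by (rule P.Fubini[symmetric, OF h_meas[OF assms]])
  also have "\<dots> = B1 g f"
    unfolding B1_def by (simp add: dist_commute mult.commute mult.left_commute)
  finally show ?thesis .
qed

lemma main_est:
  fixes f g :: "real^2 \<Rightarrow> real" and A Bm C R :: real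
  assumes fpos: "\<And>x. f x > 0" and gpos: "\<And>x. g x > 0"
    and fint: "integrable lebesgue f" and gint: "integrable lebesgue g"
    and fmass: "(\<integral>x. f x \<partial>lebesgue) = A" and gmass: "(\<integral>x. g x \<partial>lebesgue) = Bm"
    and Bb: "B1 f g \<le> ennreal C" and C0: "C \<ge> 0" and R0: "R > 0"
  shows "A * Bm \<le> A * (SUP x. (\<integral>y\<in>ball x R. g y \<partial>lebesgue)) + C / ln (1 + R)"
proof -
  define L where "L = ln (1 + R)"
  have L0: "L > 0" unfolding L_def using R0 by simp
  define S where "S = (SUP x. (\<integral>y\<in>ball x R. g y \<partial>lebesgue))"
  have fm: "f \<in> borel_measurable lebesgue" using fint by (rule borel_measurable_integrable)
  have gm: "g \<in> borel_measurable lebesgue" using gint by (rule borel_measurable_integrable)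
  have A0: "A \<ge> 0" using fmass fpos by (metis integral_nonneg_AE less_imp_le AE_I2)
  have B0: "Bm \<ge> 0" using gmass gpos by (metis integral_nonneg_AE less_imp_le AE_I2)
  have giint: "\<And>x. integrable lebesgue (\<lambda>y. g y * indicator (ball x R) y)"
    using integrable_mult_indicator[OF _ gint] by (simp add: mult.commute)
  have si: "\<And>x. (\<integral>y\<in>ball x R. g y \<partial>lebesgue) = (\<integral>y. g y * indicator (ball x R) y \<partial>lebesgue)"
    unfolding set_lebesgue_integral_def by (simp add: mult.commute)
  have si_le: "\<And>x. (\<integral>y\<in>ball x R. g y \<partial>lebesgue) \<le> Bm"
    unfolding si gmass[symmetric]
    by (rule integral_mono[OF giint gint]) (auto simp: indicator_def less_imp_le gpos)
  have si_ge: "\<And>x. (\<integral>y\<in>ball x R. g y \<partial>lebesgue) \<ge> 0"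
    unfolding si by (rule integral_nonneg_AE) (auto simp: indicator_def less_imp_le gpos)
  have bdd: "bdd_above (range (\<lambda>x. (\<integral>y\<in>ball x R. g y \<partial>lebesgue)))"
    by (rule bdd_aboveI2[where M=Bm]) (rule si_le)
  have S_ge: "\<And>x. (\<integral>y\<in>ball x R. g y \<partial>lebesgue) \<le> S"
    unfolding S_def by (rule cSUP_upper[OF _ bdd]) simp
  have S0: "S \<ge> 0" using si_ge[of 0] S_ge[of 0] by linarith
  define F where "F x = (\<integral>\<^sup>+ y. ennreal (ln (1 + dist x y) * f x * g y) \<partial>lebesgue)" for x
  have Fm: "F \<in> borel_measurable lebesgue"
    using sigma_finite_measure.borel_measurable_nn_integral_fst[OF sf_leb h_meas[OF fm gm]]
    unfolding F_def by simp
  have hym: "\<And>x. (\<lambda>y. ennreal (ln (1 + dist x y) * f x * g y)) \<in> borel_measurable lebesgue"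
    using measurable_compose_Pair1[OF _ h_meas[OF fm gm]] by simp
  have pw: "ennreal (f x * Bm) \<le> ennreal (f x * S) + ennreal (1 / L) * F x" for x
  proof -
    have real_ineq: "f x * g y \<le> f x * (g y * indicator (ball x R) y) + (1 / L) * (ln (1 + dist x y) * f x * g y)" for y
    proof (cases "dist x y < R")
      case True
      have "0 \<le> (1 / L) * (ln (1 + dist x y) * f x * g y)"
        using L0 fpos[of x] gpos[of y] by (intro mult_nonneg_nonneg) (auto intro: less_imp_le)
      then show ?thesis using True by (simp add: indicator_def dist_commute)
    next
      case False
      have "L \<le> ln (1 + dist x y)" unfolding L_def using False R0 by simp
      then have "1 \<le> (1 / L) * ln (1 + dist x y)" using L0 by (simp add: field_simps)
      then have "1 * (f x * g y) \<le> ((1 / L) * ln (1 + dist x y)) * (f x * g y)"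
        using fpos[of x] gpos[of y] by (intro mult_right_mono) auto
      then show ?thesis using False by (simp add: indicator_def dist_commute mult.assoc)
    qed
    have nn1: "0 \<le> f x * (g y * indicator (ball x R) y)" for y
      using fpos[of x] gpos[of y] by (simp add: indicator_def less_imp_le)
    have nn2: "0 \<le> ln (1 + dist x y) * f x * g y" for y
      using fpos[of x] gpos[of y] by (simp add: less_imp_le)
    have "ennreal (f x * Bm) = (\<integral>\<^sup>+ y. ennreal (f x * g y) \<partial>lebesgue)"
      by (subst nn_integral_eq_integral) (auto intro: integrable_mult_right[OF gint] simp: gmass fpos gpos less_imp_le gint)
    also have "\<dots> \<le> (\<integral>\<^sup>+ y. ennreal (f x * (g y * indicator (ball x R) y)) + ennreal (1 / L) * ennreal (ln (1 + dist x y) * f x * g y) \<partial>lebesgue)"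
    proof (rule nn_integral_mono)
      fix y
      have "ennreal (f x * g y) \<le> ennreal (f x * (g y * indicator (ball x R) y) + (1 / L) * (ln (1 + dist x y) * f x * g y))"
        by (rule ennreal_leI[OF real_ineq])
      also have "\<dots> = ennreal (f x * (g y * indicator (ball x R) y)) + ennreal (1 / L) * ennreal (ln (1 + dist x y) * f x * g y)"
        using nn1[of y] nn2[of y] L0 by (simp add: ennreal_plus[symmetric] ennreal_mult[symmetric] del: ennreal_plus)
      finally show "ennreal (f x * g y) \<le> \<dots>" .
    qed
    also have "\<dots> = (\<integral>\<^sup>+ y. ennreal (f x * (g y * indicator (ball x R) y)) \<partial>lebesgue) + ennreal (1 / L) * F x"
    proof -
      have bl: "ball x R \<in> sets lebesgue" by simp
      note [measurable] = gm fm hym bl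
      have m1: "(\<lambda>y. ennreal (f x * (g y * indicator (ball x R) y))) \<in> borel_measurable lebesgue"
        by measurable
      have m2: "(\<lambda>y. ennreal (1 / L) * ennreal (ln (1 + dist x y) * f x * g y)) \<in> borel_measurable lebesgue"
        by measurable
      show ?thesis unfolding F_def
        using nn_integral_add[OF m1 m2] nn_integral_cmult[OF hym[of x], of "ennreal (1 / L)"] by simp
    qed
    also have "(\<integral>\<^sup>+ y. ennreal (f x * (g y * indicator (ball x R) y)) \<partial>lebesgue) = ennreal (f x * (\<integral>y\<in>ball x R. g y \<partial>lebesgue))"
      unfolding si
      by (subst nn_integral_eq_integral[OF integrable_mult_right[OF giint[of x]]]) (auto simp: nn1 giint)
    also have "\<dots> \<le> ennreal (f x * S)"
      using S_ge[of x] fpos[of x] by (intro ennreal_leI mult_left_mono) auto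
    finally show ?thesis by (simp add: add_right_mono)
  qed
  have "ennreal (A * Bm) = (\<integral>\<^sup>+ x. ennreal (f x * Bm) \<partial>lebesgue)"
    by (subst nn_integral_eq_integral) (auto intro: integrable_mult_left[OF fint] simp: fmass fpos B0 less_imp_le fint)
  also have "\<dots> \<le> (\<integral>\<^sup>+ x. ennreal (f x * S) + ennreal (1 / L) * F x \<partial>lebesgue)"
    by (rule nn_integral_mono) (rule pw)
  also have "\<dots> = (\<integral>\<^sup>+ x. ennreal (f x * S) \<partial>lebesgue) + ennreal (1 / L) * (\<integral>\<^sup>+ x. F x \<partial>lebesgue)"
  proof -
    note [measurable] = fm Fm
    have m1: "(\<lambda>x. ennreal (f x * S)) \<in> borel_measurable lebesgue" by measurable
    have m2: "(\<lambda>x. ennreal (1 / L) * F x) \<in> borel_measurable lebesgue" by measurable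
    show ?thesis
      using nn_integral_add[OF m1 m2] nn_integral_cmult[OF Fm, of "ennreal (1 / L)"] by simp
  qed
  also have "(\<integral>\<^sup>+ x. ennreal (f x * S) \<partial>lebesgue) = ennreal (A * S)"
    by (subst nn_integral_eq_integral) (auto intro: integrable_mult_left[OF fint] simp: fmass fpos S0 less_imp_le fint)
  also have "(\<integral>\<^sup>+ x. F x \<partial>lebesgue) = B1 f g" unfolding F_def B1_def ..
  also have "ennreal (A * S) + ennreal (1 / L) * B1 f g \<le> ennreal (A * S) + ennreal (1 / L) * ennreal C"
    using Bb by (intro add_left_mono mult_left_mono) auto
  also have "\<dots> = ennreal (A * S + C / L)"
    using A0 S0 C0 L0 by (simp add: ennreal_plus[symmetric] ennreal_mult[symmetric] del: ennreal_plus)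
  finally have "A * Bm \<le> A * S + C / L"
    using A0 S0 C0 L0 by (subst (asm) ennreal_le_iff) auto
  then show ?thesis unfolding S_def L_def .
qed


theorem lemma3p2:
  fixes \<rho> \<tau> :: "nat \<Rightarrow> real^2 \<Rightarrow> real" and a b :: real
  assumes a_pos: "a > 0" and b_pos: "b > 0"
    and rho_pos: "\<And>n x. \<rho> n x > 0" and tau_pos: "\<And>n x. \<tau> n x > 0"
    and rho_int: "\<And>n. integrable lebesgue (\<rho> n)"
    and tau_int: "\<And>n. integrable lebesgue (\<tau> n)"
    and rho_mass: "\<And>n. (\<integral>x. \<rho> n x \<partial>lebesgue) = a"
    and tau_mass: "\<And>n. (\<integral>x. \<tau> n x \<partial>lebesgue) = b"
    and bounded: "\<exists>C::real. \<forall>n. B1 (\<rho> n) (\<tau> n) \<le> ennreal C"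
  shows "\<forall>\<epsilon>>0. \<exists>\<xi>>0. \<forall>r>\<xi>. \<forall>n.
           (SUP x. (\<integral>y\<in>ball x r. \<rho> n y \<partial>lebesgue)) \<ge> a - \<epsilon> \<and>
           (SUP x. (\<integral>y\<in>ball x r. \<tau> n y \<partial>lebesgue)) \<ge> b - \<epsilon>"
proof (intro allI impI)
  fix \<epsilon> :: real assume \<epsilon>: "\<epsilon> > 0"
  obtain C0 where C0: "\<forall>n. B1 (\<rho> n) (\<tau> n) \<le> ennreal C0" using bounded by blast
  define C where "C = max C0 0"
  have C_nn: "C \<ge> 0" unfolding C_def by simp
  have Cb: "B1 (\<rho> n) (\<tau> n) \<le> ennreal C" for n
  proof -
    have "ennreal C0 \<le> ennreal C" by (rule ennreal_leI) (simp add: C_def)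
    then show ?thesis using C0 by (blast intro: order_trans)
  qed
  have Cb': "B1 (\<tau> n) (\<rho> n) \<le> ennreal C" for n
  proof -
    have "B1 (\<tau> n) (\<rho> n) = B1 (\<rho> n) (\<tau> n)"
      by (rule B1_sym[OF borel_measurable_integrable[OF tau_int] borel_measurable_integrable[OF rho_int]])
    then show ?thesis using Cb[of n] by simp
  qed
  define m where "m = min a b"
  have m0: "m > 0" unfolding m_def using a_pos b_pos by simp
  define \<xi> where "\<xi> = exp (C / (\<epsilon> * m))"
  show "\<exists>\<xi>>0. \<forall>r>\<xi>. \<forall>n.
           (SUP x. (\<integral>y\<in>ball x r. \<rho> n y \<partial>lebesgue)) \<ge> a - \<epsilon> \<and>
           (SUP x. (\<integral>y\<in>ball x r. \<tau> n y \<partial>lebesgue)) \<ge> b - \<epsilon>"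
  proof (intro exI[of _ \<xi>] conjI allI impI)
    show "\<xi> > 0" unfolding \<xi>_def by simp
    fix r :: real and n :: nat assume r: "r > \<xi>"
    have r0: "r > 0" using r \<open>\<xi> > 0\<close> by linarith
    have "C / (\<epsilon> * m) = ln \<xi>" unfolding \<xi>_def by simp
    also have "\<dots> \<le> ln (1 + r)" using r \<open>\<xi> > 0\<close> by simp
    finally have lnr: "C / (\<epsilon> * m) \<le> ln (1 + r)" .
    have Lpos: "ln (1 + r) > 0" using r0 by simp
    have "C \<le> \<epsilon> * m * ln (1 + r)" using lnr \<epsilon> m0 by (simp add: pos_divide_le_eq mult.commute)
    then have key: "C / ln (1 + r) \<le> \<epsilon> * m" using Lpos by (simp add: pos_divide_le_eq)
    define St where "St = (SUP x. (\<integral>y\<in>ball x r. \<tau> n y \<partial>lebesgue))"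
    define Sr where "Sr = (SUP x. (\<integral>y\<in>ball x r. \<rho> n y \<partial>lebesgue))"
    have t1: "a * b \<le> a * St + C / ln (1 + r)" unfolding St_def
      by (rule main_est[OF rho_pos tau_pos rho_int tau_int rho_mass tau_mass Cb C_nn r0])
    have t2: "b * a \<le> b * Sr + C / ln (1 + r)" unfolding Sr_def
      by (rule main_est[OF tau_pos rho_pos tau_int rho_int tau_mass rho_mass Cb' C_nn r0])
    have "\<epsilon> * m \<le> \<epsilon> * a" "\<epsilon> * m \<le> \<epsilon> * b" unfolding m_def using \<epsilon> by auto
    moreover have "a * (b - \<epsilon>) = a * b - \<epsilon> * a" "b * (a - \<epsilon>) = b * a - \<epsilon> * b"
      by (simp_all add: algebra_simps)
    ultimately have "a * (b - \<epsilon>) \<le> a * St" "b * (a - \<epsilon>) \<le> b * Sr"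
      using t1 t2 key by linarith+
    then show "Sr \<ge> a - \<epsilon>" "St \<ge> b - \<epsilon>"
      using mult_le_cancel_left_pos[OF a_pos] mult_le_cancel_left_pos[OF b_pos] by blast+
  qed
qed

end
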